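(* Let $G$ be a distance-regular graph of diameter $d$ which is an antipodal double cover, and let $B$ be its tridiagonal intersection matrix. If $G$ admits a distance magic labeling, then $\ker B$ has a basis consisting of a single vector $\boldsymbol{u}=(u_0,\dots,u_d)^T$ with $u_0=1$ and $u_d=-1$. If $G$ admits a closed distance magic labeling, then $\ker(I+B)$ has a basis consisting of a single vector $\boldsymbol{u}=(u_0,\dots,u_d)^T$ with $u_0=1$ and $u_d=-1$.
   Context: A connected graph $G$ of diameter $d$ is distance-regular if there are non-negative integers $b_i,c_i$ ($0\le i\le d$) such that for any two vertices $x,y$ at distance $i$, $y$ has exactly $c_i$ neighbours at distance $i-1$ from $x$ and exactly $b_i$ neighbours at distance $i+1$ from $x$. $G$ is $r$-regular with $r=b_0$, $c_0=b_d=0$, $c_1=1$, $a_i=r-b_i-c_i$. $B$ is the $(d+1)\times(d+1)$ tridiagonal matrix indexed by $0,\dots,d$ with $B_{i,i}=a_i$, $B_{i,i+1}=c_{i+1}$, $B_{i+1,i}=b_i$, other entries $0$. $G$ is an antipodal double cover if every vertex has exactly one vertex at distance $d$ from it. A distance magic (resp. closed distance magic) labeling of $G$ of order $N$ is a bijection $l:V(G)\to\{1,\dots,N\}$ such that $\sum_{y\in N(x)}l(y)$ (resp. $\sum_{y\in N(x)\cup\{x\}}l(y)$) is the same for every vertex $x$. *)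

theory Defs
  imports Main "Jordan_Normal_Form.Matrix_Kernel"
begin

definition simple_graph :: "'a set \<Rightarrow> ('a \<Rightarrow> 'a \<Rightarrow> bool) \<Rightarrow> bool" where
  "simple_graph V E \<longleftrightarrow> finite V \<and> V \<noteq> {} \<and>
     (\<forall>x y. E x y \<longrightarrow> x \<in> V \<and> y \<in> V) \<and> (\<forall>x y. E x y \<longrightarrow> E y x) \<and> (\<forall>x. \<not> E x x)"

definition gdist :: "('a \<Rightarrow> 'a \<Rightarrow> bool) \<Rightarrow> 'a \<Rightarrow> 'a \<Rightarrow> nat" where
  "gdist E x y = (LEAST n. (E ^^ n) x y)"

definition connected_graph :: "'a set \<Rightarrow> ('a \<Rightarrow> 'a \<Rightarrow> bool) \<Rightarrow> bool" where
  "connected_graph V E \<longleftrightarrow> (\<forall>x\<in>V. \<forall>y\<in>V. \<exists>n. (E ^^ n) x y)"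

definition diameter :: "'a set \<Rightarrow> ('a \<Rightarrow> 'a \<Rightarrow> bool) \<Rightarrow> nat" where
  "diameter V E = Max {gdist E x y | x y. x \<in> V \<and> y \<in> V}"

definition distance_regular ::
  "'a set \<Rightarrow> ('a \<Rightarrow> 'a \<Rightarrow> bool) \<Rightarrow> nat \<Rightarrow> (nat \<Rightarrow> nat) \<Rightarrow> (nat \<Rightarrow> nat) \<Rightarrow> bool" where
  "distance_regular V E d b c \<longleftrightarrow>
     simple_graph V E \<and> connected_graph V E \<and> diameter V E = d \<and>
     (\<forall>i\<le>d. \<forall>x\<in>V. \<forall>y\<in>V. gdist E x y = i \<longrightarrow>
        card {z\<in>V. E y z \<and> gdist E x z + 1 = i} = c i \<and>
        card {z\<in>V. E y z \<and> gdist E x z = i + 1} = b i)"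

definition inter_a :: "(nat \<Rightarrow> nat) \<Rightarrow> (nat \<Rightarrow> nat) \<Rightarrow> nat \<Rightarrow> nat" where
  "inter_a b c i = b 0 - b i - c i"

definition inter_matrix :: "nat \<Rightarrow> (nat \<Rightarrow> nat) \<Rightarrow> (nat \<Rightarrow> nat) \<Rightarrow> real mat" where
  "inter_matrix d b c = mat (d+1) (d+1) (\<lambda>(i,j).
      if i = j then real (inter_a b c i)
      else if j = i + 1 then real (c (i+1))
      else if i = j + 1 then real (b j)
      else 0)"

definition antipodal_double_cover :: "'a set \<Rightarrow> ('a \<Rightarrow> 'a \<Rightarrow> bool) \<Rightarrow> nat \<Rightarrow> bool" where
  "antipodal_double_cover V E d \<longleftrightarrow> (\<forall>x\<in>V. \<exists>!y. y \<in> V \<and> gdist E x y = d)"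

definition distance_magic :: "'a set \<Rightarrow> ('a \<Rightarrow> 'a \<Rightarrow> bool) \<Rightarrow> bool" where
  "distance_magic V E \<longleftrightarrow> (\<exists>l::'a \<Rightarrow> nat. \<exists>k. bij_betw l V {1..card V} \<and>
     (\<forall>x\<in>V. (\<Sum>y\<in>{y\<in>V. E x y}. l y) = k))"

definition closed_distance_magic :: "'a set \<Rightarrow> ('a \<Rightarrow> 'a \<Rightarrow> bool) \<Rightarrow> bool" where
  "closed_distance_magic V E \<longleftrightarrow> (\<exists>l::'a \<Rightarrow> nat. \<exists>k. bij_betw l V {1..card V} \<and>
     (\<forall>x\<in>V. (\<Sum>y\<in>{y\<in>V. E x y} \<union> {x}. l y) = k))"

end

theory Submission
  imports Defs
begin

lemma relpowp_sym:
  assumes "\<forall>x y. E x y \<longrightarrow> E y x"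
  shows "(E ^^ n) x y \<Longrightarrow> (E ^^ n) y x"
proof (induction n arbitrary: y)
  case 0 then show ?case by simp
next
  case (Suc n)
  from Suc.prems obtain z where z: "(E ^^ n) x z" "E z y" by (rule relpowp_Suc_E)
  have "E y z" using assms z(2) by blast
  moreover have "(E ^^ n) z x" using Suc.IH z(1) by blast
  ultimately show ?case by (rule relpowp_Suc_I2)
qed

lemma gdist_sym:
  assumes "\<forall>x y. E x y \<longrightarrow> E y x"
  shows "gdist E x y = gdist E y x"
proof -
  have "(\<lambda>n. (E ^^ n) x y) = (\<lambda>n. (E ^^ n) y x)"
    using relpowp_sym[OF assms] by blast
  then show ?thesis unfolding gdist_def by simp
qed

lemma gdist_le: "(E ^^ n) x y \<Longrightarrow> gdist E x y \<le> n"
  unfolding gdist_def by (rule Least_le)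

lemma gdist_path:
  assumes "connected_graph V E" "x \<in> V" "y \<in> V"
  shows "(E ^^ gdist E x y) x y"
proof -
  from assms obtain n where "(E ^^ n) x y" unfolding connected_graph_def by blast
  then show ?thesis unfolding gdist_def by (rule LeastI)
qed

lemma gdist_self: "gdist E x x = 0"
  using gdist_le[where E=E and n=0 and x=x and y=x] by simp

lemma gdist_0_iff:
  assumes "connected_graph V E" "x \<in> V" "y \<in> V"
  shows "gdist E x y = 0 \<longleftrightarrow> x = y"
  using gdist_path[OF assms] gdist_self[of E x] by auto

lemma gdist_step:
  assumes "connected_graph V E" "x \<in> V" "z \<in> V" "E z y"
  shows "gdist E x y \<le> gdist E x z + 1"
proof -
  have "(E ^^ Suc (gdist E x z)) x y"
    using gdist_path[OF assms(1-3)] assms(4) by (rule relpowp_Suc_I)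
  then show ?thesis using gdist_le by fastforce
qed

lemma gdist_adj1:
  assumes "simple_graph V E" "E z y"
  shows "gdist E z y = 1"
proof -
  have "gdist E z y \<le> 1" using gdist_le[where E=E and n=1 and x=z and y=y] assms(2) by (metis relpowp_1)
  moreover have "gdist E z y \<noteq> 0"
  proof
    assume "gdist E z y = 0"
    then have "(E ^^ 0) z y" unfolding gdist_def
      by (metis (mono_tags, lifting) LeastI_ex assms(2) relpowp_1)
    then show False using assms unfolding simple_graph_def by auto
  qed
  ultimately show ?thesis by simp
qed

lemma dr_basic:
  assumes "distance_regular V E d b c"
  shows "simple_graph V E" "connected_graph V E" "finite V" "\<forall>x y. E x y \<longrightarrow> E y x"
    "\<forall>x y. E x y \<longrightarrow> x \<in> V \<and> y \<in> V" "\<forall>x. \<not> E x x"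
  using assms unfolding distance_regular_def simple_graph_def by auto

lemma dr_le_d:
  assumes "distance_regular V E d b c" "x \<in> V" "y \<in> V"
  shows "gdist E x y \<le> d"
proof -
  have fin: "finite V" using dr_basic[OF assms(1)] by simp
  have eq: "{gdist E x y | x y. x \<in> V \<and> y \<in> V} = (\<lambda>(x,y). gdist E x y) ` (V \<times> V)" by auto
  have "finite {gdist E x y | x y. x \<in> V \<and> y \<in> V}" unfolding eq using fin by simp
  moreover have "gdist E x y \<in> {gdist E x y | x y. x \<in> V \<and> y \<in> V}" using assms by blast
  ultimately have "gdist E x y \<le> diameter V E" unfolding diameter_def by (rule Max_ge)
  then show ?thesis using assms(1) unfolding distance_regular_def by simp
qed

lemma dr_deg:
  assumes "distance_regular V E d b c" "x \<in> V"
  shows "card {y\<in>V. E x y} = b 0"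
proof -
  have "card {z\<in>V. E x z \<and> gdist E x z = 0 + 1} = b 0"
    using assms gdist_self[of E x] unfolding distance_regular_def by blast
  moreover have "{z\<in>V. E x z \<and> gdist E x z = 0 + 1} = {y\<in>V. E x y}"
    using gdist_adj1[OF dr_basic(1)[OF assms(1)]] by auto
  ultimately show ?thesis by simp
qed

definition Bent :: "(nat \<Rightarrow> nat) \<Rightarrow> (nat \<Rightarrow> nat) \<Rightarrow> nat \<Rightarrow> nat \<Rightarrow> real" where
  "Bent b c i j = (if i = j then real (inter_a b c i) else if j = i + 1 then real (c (i+1))
      else if i = j + 1 then real (b j) else 0)"

lemma dr_count:
  assumes dr: "distance_regular V E d b c" and xz: "x \<in> V" "z \<in> V" and j: "gdist E x z = j"
  shows "real (card {y\<in>V. E z y \<and> gdist E x y = i}) = Bent b c i j"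
proof -
  note bas = dr_basic[OF dr]
  have jd: "j \<le> d" using dr_le_d[OF dr xz] j by simp
  have C: "card {w\<in>V. E z w \<and> gdist E x w + 1 = j} = c j"
   and Bb: "card {w\<in>V. E z w \<and> gdist E x w = j + 1} = b j"
    using dr jd xz j unfolding distance_regular_def by blast+
  have near: "gdist E x y \<le> j + 1 \<and> j \<le> gdist E x y + 1" if "E z y" for y
  proof -
    have yV: "y \<in> V" using bas(5) that by blast
    have "gdist E x y \<le> gdist E x z + 1" using gdist_step[OF bas(2) xz that] .
    moreover have "gdist E x z \<le> gdist E x y + 1"
      using gdist_step[OF bas(2) xz(1) yV] bas(4) that by blast
    ultimately show ?thesis using j by simp
  qed
  show ?thesis
  proof (cases "i = j")
    case True
    let ?X = "{w\<in>V. E z w \<and> gdist E x w + 1 = j}"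
    let ?Y = "{y\<in>V. E z y \<and> gdist E x y = i}"
    let ?Z = "{w\<in>V. E z w \<and> gdist E x w = j + 1}"
    have un: "{y\<in>V. E z y} = ?X \<union> ?Y \<union> ?Z" using near True by fastforce
    have fin: "finite ?X" "finite ?Y" "finite ?Z" using bas(3) by auto
    have "card (?X \<union> ?Y \<union> ?Z) = card ?X + card ?Y + card ?Z"
      using fin True by (subst card_Un_disjoint, auto)+
    then have "b 0 = c j + card ?Y + b j" using dr_deg[OF dr xz(2)] un C Bb by simp
    then have "card ?Y = inter_a b c j" unfolding inter_a_def by simp
    then show ?thesis unfolding Bent_def using True by simp
  next
    case False
    show ?thesis
    proof (cases "j = i + 1")
      case True
      have "{y\<in>V. E z y \<and> gdist E x y = i} = {w\<in>V. E z w \<and> gdist E x w + 1 = j}" using True by auto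
      then show ?thesis using C True False unfolding Bent_def by simp
    next
      case F2: False
      show ?thesis
      proof (cases "i = j + 1")
        case True
        then show ?thesis using Bb False F2 unfolding Bent_def by simp
      next
        case F3: False
        have "{y\<in>V. E z y \<and> gdist E x y = i} = {}" using near False F2 F3 by fastforce
        then have "card {y\<in>V. E z y \<and> gdist E x y = i} = 0" by (metis card.empty)
        then show ?thesis using False F2 F3 unfolding Bent_def by simp
      qed
    qed
  qed
qed


lemma double_count:
  assumes fin: "finite V" and S: "S \<subseteq> V" and sym: "\<forall>x y. E x y \<longrightarrow> E y x"
  shows "(\<Sum>y\<in>S. \<Sum>z\<in>{z\<in>V. E y z}. g z) = (\<Sum>z\<in>V. g z * real (card {y\<in>S. E z y}))"
proof -
  have finS: "finite S" using fin S finite_subset by blast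
  have "(\<Sum>y\<in>S. \<Sum>z\<in>{z\<in>V. E y z}. g z) = (\<Sum>y\<in>S. \<Sum>z\<in>V. if E y z then g z else 0)"
    using fin by (simp add: sum.inter_filter)
  also have "\<dots> = (\<Sum>z\<in>V. \<Sum>y\<in>S. if E y z then g z else 0)" by (rule sum.swap)
  also have "\<dots> = (\<Sum>z\<in>V. g z * real (card {y\<in>S. E z y}))"
  proof (rule sum.cong[OF refl])
    fix z
    have "(\<Sum>y\<in>S. if E y z then g z else 0) = (\<Sum>y\<in>{y\<in>S. E y z}. g z)"
      using sum.inter_filter[OF finS, of "\<lambda>_. g z" "\<lambda>y. E y z"] by simp
    also have "{y\<in>S. E y z} = {y\<in>S. E z y}" using sym by blast
    finally show "(\<Sum>y\<in>S. if E y z then g z else 0) = g z * real (card {y\<in>S. E z y})"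
      by simp
  qed
  finally show ?thesis .
qed

lemma w_kernel:
  assumes dr: "distance_regular V E d b c" and x: "x \<in> V"
    and f: "\<forall>y\<in>V. (\<Sum>z\<in>{z\<in>V. E y z}. f z) + s * f y = 0" and i: "i < d + 1"
  shows "(\<Sum>j<d+1. (s * (if i = j then 1 else 0) + Bent b c i j) *
            (\<Sum>y\<in>{y\<in>V. gdist E x y = j}. f y)) = 0"
proof -
  note bas = dr_basic[OF dr]
  define w where "w j = (\<Sum>y\<in>{y\<in>V. gdist E x y = j}. f y)" for j
  define S where "S = {y\<in>V. gdist E x y = i}"
  have SV: "S \<subseteq> V" unfolding S_def by auto
  have "0 = (\<Sum>y\<in>S. (\<Sum>z\<in>{z\<in>V. E y z}. f z) + s * f y)"
    using f SV by (simp add: subset_iff)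
  also have "\<dots> = (\<Sum>y\<in>S. \<Sum>z\<in>{z\<in>V. E y z}. f z) + s * w i"
    by (simp add: sum.distrib sum_distrib_left w_def S_def)
  also have "(\<Sum>y\<in>S. \<Sum>z\<in>{z\<in>V. E y z}. f z) = (\<Sum>z\<in>V. f z * real (card {y\<in>S. E z y}))"
    using double_count[OF bas(3) SV bas(4)] .
  also have "\<dots> = (\<Sum>z\<in>V. f z * Bent b c i (gdist E x z))"
  proof (rule sum.cong[OF refl])
    fix z assume z: "z \<in> V"
    have "{y\<in>S. E z y} = {y\<in>V. E z y \<and> gdist E x y = i}" unfolding S_def by auto
    then show "f z * real (card {y\<in>S. E z y}) = f z * Bent b c i (gdist E x z)"
      using dr_count[OF dr x z refl, of i] by simp
  qed
  also have "\<dots> = (\<Sum>j<d+1. \<Sum>z\<in>{z. z \<in> V \<and> gdist E x z = j}. f z * Bent b c i (gdist E x z))"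
    by (rule sum.group[symmetric], rule bas(3), simp, use dr_le_d[OF dr x] in \<open>force simp: less_Suc_eq_le\<close>)
  also have "\<dots> = (\<Sum>j<d+1. Bent b c i j * w j)"
    unfolding w_def by (rule sum.cong[OF refl]) (simp add: sum_distrib_left mult.commute)
  finally have A: "(\<Sum>j<d+1. Bent b c i j * w j) + s * w i = 0" by simp
  have "(\<Sum>j<d+1. (s * (if i = j then 1 else 0) + Bent b c i j) * w j)
        = (\<Sum>j<d+1. (if i = j then s * w j else 0)) + (\<Sum>j<d+1. Bent b c i j * w j)"
    by (subst sum.distrib[symmetric], rule sum.cong, auto simp: distrib_right)
  also have "(\<Sum>j<d+1. (if i = j then s * w j else 0)) = (if i < d+1 then s * w i else 0)"
    by simp
  finally show ?thesis using A i unfolding w_def by simp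
qed


definition Kv :: "nat \<Rightarrow> (nat \<Rightarrow> nat) \<Rightarrow> (nat \<Rightarrow> nat) \<Rightarrow> real \<Rightarrow> (nat \<Rightarrow> real) \<Rightarrow> bool" where
  "Kv d b c s v \<longleftrightarrow> (\<forall>i<d+1. (\<Sum>j<d+1. (s * (if i = j then 1 else 0) + Bent b c i j) * v j) = 0)"

lemma Kv_lin:
  assumes "Kv d b c s v" "Kv d b c s u"
  shows "Kv d b c s (\<lambda>j. v j - t * u j)"
proof -
  have "(\<Sum>j<d+1. (s * (if i = j then 1 else 0) + Bent b c i j) * (v j - t * u j))
     = (\<Sum>j<d+1. (s * (if i = j then 1 else 0) + Bent b c i j) * v j)
       - t * (\<Sum>j<d+1. (s * (if i = j then 1 else 0) + Bent b c i j) * u j)" for i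
  proof -
    have "(\<Sum>j<d+1. (s * (if i = j then 1 else 0) + Bent b c i j) * (v j - t * u j))
      = (\<Sum>j<d+1. (s * (if i = j then 1 else 0) + Bent b c i j) * v j
          - t * ((s * (if i = j then 1 else 0) + Bent b c i j) * u j))"
      by (rule sum.cong[OF refl]) (simp add: algebra_simps)
    then show ?thesis by (simp only: sum_subtractf sum_distrib_left)
  qed
  then show ?thesis using assms unfolding Kv_def by simp
qed

lemma Kv_zero:
  assumes K: "Kv d b c s v" and v0: "v 0 = 0" and cpos: "\<forall>i<d. c (i+1) > 0"
  shows "\<forall>j<d+1. v j = 0"
proof -
  have "\<forall>j\<le>m. v j = 0" if "m < d + 1" for m
    using that
  proof (induction m)
    case 0 then show ?case using v0 by simp
  next
    case (Suc m)
    then have IH: "\<forall>j\<le>m. v j = 0" by simp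
    have md: "m < d + 1" "m < d" using Suc.prems by auto
    have "(\<Sum>j<d+1. (s * (if m = j then 1 else 0) + Bent b c m j) * v j) = 0"
      using K md unfolding Kv_def by blast
    also have "(\<Sum>j<d+1. (s * (if m = j then 1 else 0) + Bent b c m j) * v j)
      = (\<Sum>j<d+1. if j = Suc m then real (c (Suc m)) * v (Suc m) else 0)"
    proof (rule sum.cong[OF refl])
      fix j assume "j \<in> {..<d+1}"
      show "(s * (if m = j then 1 else 0) + Bent b c m j) * v j
          = (if j = Suc m then real (c (Suc m)) * v (Suc m) else 0)"
      proof (cases "j \<le> m")
        case True then show ?thesis using IH by simp
      next
        case False
        show ?thesis
        proof (cases "j = Suc m")
          case True then show ?thesis unfolding Bent_def by simp
        next
          case F2: False
          then have "Bent b c m j = 0" using False unfolding Bent_def by simp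
          then show ?thesis using False F2 by simp
        qed
      qed
    qed
    also have "\<dots> = real (c (Suc m)) * v (Suc m)" using Suc.prems by simp
    finally have "real (c (Suc m)) * v (Suc m) = 0" .
    moreover have "c (Suc m) > 0" using cpos md by simp
    ultimately have "v (Suc m) = 0" by simp
    then show ?case using IH le_Suc_eq by auto
  qed
  then show ?thesis by blast
qed

lemma ker_char:
  fixes A :: "real mat"
  assumes A: "A \<in> carrier_mat n n"
  shows "v \<in> mat_kernel A \<longleftrightarrow> v \<in> carrier_vec n \<and> (\<forall>i<n. (\<Sum>j<n. A $$ (i,j) * v $ j) = 0)"
proof -
  have "A *\<^sub>v v = 0\<^sub>v n \<longleftrightarrow> (\<forall>i<n. (\<Sum>j<n. A $$ (i,j) * v $ j) = 0)" if v: "v \<in> carrier_vec n"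
  proof -
    have dims: "dim_vec (A *\<^sub>v v) = n" using A by simp
    have ent: "(A *\<^sub>v v) $ i = (\<Sum>j<n. A $$ (i,j) * v $ j)" if "i < n" for i
      using A v that by (simp add: index_mult_mat_vec scalar_prod_def lessThan_atLeast0)
    have "A *\<^sub>v v = 0\<^sub>v n \<longleftrightarrow> (\<forall>i<n. (A *\<^sub>v v) $ i = 0)"
      using dims by (auto simp: vec_eq_iff)
    then show ?thesis using ent by simp
  qed
  then show ?thesis using A unfolding mat_kernel_def by auto
qed

lemma dr_down:
  assumes dr: "distance_regular V E d b c" and x: "x \<in> V" and y: "y \<in> V"
    and g: "gdist E x y = Suc m"
  shows "\<exists>z\<in>V. E y z \<and> gdist E x z = m"
proof -
  note bas = dr_basic[OF dr]
  have "(E ^^ Suc m) x y" using gdist_path[OF bas(2) x y] g by simp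
  then obtain z where z: "(E ^^ m) x z" "E z y" by (rule relpowp_Suc_E)
  have zV: "z \<in> V" using bas(5) z(2) by blast
  have "gdist E x z \<le> m" using gdist_le z(1) by metis
  moreover have "gdist E x y \<le> gdist E x z + 1" using gdist_step[OF bas(2) x zV z(2)] .
  ultimately have "gdist E x z = m" using g by simp
  moreover have "E y z" using bas(4) z(2) by blast
  ultimately show ?thesis using zV by blast
qed

lemma dr_all_dist:
  assumes dr: "distance_regular V E d b c" and x: "x \<in> V"
  shows "y \<in> V \<Longrightarrow> gdist E x y = D \<Longrightarrow> m \<le> D \<Longrightarrow> \<exists>z\<in>V. gdist E x z = m"
proof (induction D arbitrary: y)
  case 0 then show ?case by auto
next
  case (Suc D)
  show ?case
  proof (cases "m = Suc D")
    case True then show ?thesis using Suc.prems by blast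
  next
    case False
    obtain z where "z \<in> V" "gdist E x z = D" using dr_down[OF dr x Suc.prems(1,2)] by blast
    then show ?thesis using Suc.IH False Suc.prems(3) by simp
  qed
qed

lemma dr_cpos:
  assumes dr: "distance_regular V E d b c" and x: "x \<in> V" and y: "y \<in> V" and g: "gdist E x y = d"
  shows "\<forall>i<d. c (i+1) > 0"
proof (intro allI impI)
  fix i assume i: "i < d"
  have "Suc i \<le> d" using i by simp
  then have "\<exists>z\<in>V. gdist E x z = Suc i" by (rule dr_all_dist[OF dr x y g])
  then obtain y' where y': "y' \<in> V" "gdist E x y' = Suc i" by blast
  obtain z where z: "z \<in> V" "E y' z" "gdist E x z = i" using dr_down[OF dr x y'(1) y'(2)] by blast
  have "card {z\<in>V. E y' z \<and> gdist E x z + 1 = Suc i} = c (Suc i)"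
  proof -
    have "\<forall>i\<le>d. \<forall>x\<in>V. \<forall>y\<in>V. gdist E x y = i \<longrightarrow>
        card {z\<in>V. E y z \<and> gdist E x z + 1 = i} = c i"
      using dr unfolding distance_regular_def by blast
    from this[rule_format, OF \<open>Suc i \<le> d\<close> x y'(1) y'(2)] show ?thesis .
  qed
  moreover have "finite {z\<in>V. E y' z \<and> gdist E x z + 1 = Suc i}" using dr_basic(3)[OF dr] by simp
  moreover have "{z\<in>V. E y' z \<and> gdist E x z + 1 = Suc i} \<noteq> {}" using z by auto
  ultimately have "c (Suc i) > 0" by (metis card_gt_0_iff)
  then show "c (i+1) > 0" by simp
qed


lemma W0:
  assumes dr: "distance_regular V E d b c" and x: "x \<in> V"
  shows "(\<Sum>y\<in>{y\<in>V. gdist E x y = 0}. f y) = f x"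
proof -
  have "{y\<in>V. gdist E x y = 0} = {x}"
    using gdist_0_iff[OF dr_basic(2)[OF dr] x] x by auto
  then show ?thesis by simp
qed

lemma core:
  fixes f :: "'a \<Rightarrow> real" and A :: "real mat" and s :: real
  assumes dr: "distance_regular V E d b c" and d1: "d \<ge> 1"
    and anti: "antipodal_double_cover V E d"
    and inj: "inj_on f V"
    and f0: "\<forall>y\<in>V. (\<Sum>z\<in>{z\<in>V. E y z}. f z) + s * f y = 0"
    and A: "A \<in> carrier_mat (d+1) (d+1)"
    and Aent: "\<forall>i<d+1. \<forall>j<d+1. A $$ (i,j) = s * (if i = j then 1 else 0) + Bent b c i j"
  shows "\<exists>u \<in> carrier_vec (d+1). u $ 0 = 1 \<and> u $ d = -1 \<and> mat_kernel A = {t \<cdot>\<^sub>v u | t. True}"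
proof -
  note bas = dr_basic[OF dr]
  define W where "W x j = (\<Sum>y\<in>{y\<in>V. gdist E x y = j}. f y)" for x j
  have KW: "Kv d b c s (W x)" if "x \<in> V" for x
    unfolding Kv_def W_def using w_kernel[OF dr that f0] by blast
  have W0': "W x 0 = f x" if "x \<in> V" for x unfolding W_def using W0[OF dr that] .
  have ker: "v \<in> mat_kernel A \<longleftrightarrow> v \<in> carrier_vec (d+1) \<and> Kv d b c s (\<lambda>j. v $ j)" for v
    unfolding ker_char[OF A] Kv_def using Aent by simp
  have antex: "\<exists>!y. y \<in> V \<and> gdist E x y = d" if "x \<in> V" for x
    using anti that unfolding antipodal_double_cover_def by blast
  define ant where "ant x = (THE y. y \<in> V \<and> gdist E x y = d)" for x
  have ant: "ant x \<in> V \<and> gdist E x (ant x) = d" if "x \<in> V" for x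
    unfolding ant_def using theI'[OF antex[OF that]] .
  have antin: "ant x \<in> V" if "x \<in> V" for x using ant[OF that] by blast
  have ant_uniq: "y = ant x" if "x \<in> V" "y \<in> V" "gdist E x y = d" for x y
    using antex[OF that(1)] ant[OF that(1)] that by blast
  have antV: "{y\<in>V. gdist E x y = d} = {ant x}" if "x \<in> V" for x
    using ant[OF that] ant_uniq[OF that] by blast
  have Wd: "W x d = f (ant x)" if "x \<in> V" for x
    unfolding W_def antV[OF that] by simp
  have antant: "ant (ant x) = x" if "x \<in> V" for x
  proof -
    have "gdist E (ant x) x = d" using ant[OF that] gdist_sym[OF bas(4)] by metis
    then show ?thesis using ant_uniq[of "ant x" x] ant[OF that] that by simp
  qed
  have antne: "ant x \<noteq> x" if "x \<in> V" for x
    using ant[OF that] gdist_self[of E x] d1 by auto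
  have Vne: "V \<noteq> {}" using bas(1) unfolding simple_graph_def by blast
  then obtain x1 where x1: "x1 \<in> V" by blast
  have cpos: "\<forall>i<d. c (i+1) > 0" using dr_cpos[OF dr x1] ant[OF x1] by blast
  obtain x0 where x0: "x0 \<in> V" "f x0 \<noteq> 0"
  proof (cases "f x1 = 0")
    case True
    have "f (ant x1) \<noteq> f x1"
      using inj_on_contraD[OF inj antne[OF x1] antin[OF x1] x1] .
    then show ?thesis using that ant[OF x1] True by auto
  next
    case False then show ?thesis using that x1 by blast
  qed
  define u where "u j = W x0 j / f x0" for j
  have Ku: "Kv d b c s u"
  proof -
    have "Kv d b c s (\<lambda>j. 0 - (- 1 / f x0) * W x0 j)"
      using Kv_lin[of d b c s "\<lambda>_. 0" "W x0" "- 1 / f x0"] KW[OF x0(1)] by (simp add: Kv_def)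
    then show ?thesis unfolding u_def by simp
  qed
  have u0: "u 0 = 1" using x0 W0' unfolding u_def by simp
  have Wu: "W x j = f x * u j" if "x \<in> V" "j < d + 1" for x j
  proof -
    have K2: "Kv d b c s (\<lambda>j. W x j - f x * u j)" by (rule Kv_lin[OF KW[OF that(1)] Ku])
    have z0: "W x 0 - f x * u 0 = 0" using W0'[OF that(1)] u0 by simp
    have "\<forall>j<d+1. W x j - f x * u j = 0" using Kv_zero[OF K2 _ cpos] z0 by simp
    then show ?thesis using that(2) by simp
  qed
  have fant: "f (ant x) = f x * u d" if "x \<in> V" for x
    using Wu[OF that, of d] Wd[OF that] by simp
  have "f x0 = f x0 * u d * u d"
    using fant[OF x0(1)] fant[OF antin[OF x0(1)]] antant[OF x0(1)] by simp
  then have "f x0 * (u d * u d) = f x0 * 1" by (simp add: mult.assoc)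
  then have ud2: "u d * u d = 1" using mult_left_cancel[OF x0(2)] by blast
  have "u d \<noteq> 1"
  proof
    assume "u d = 1"
    then have "f (ant x0) = f x0" using fant[OF x0(1)] by simp
    then have "ant x0 = x0" using inj_onD[OF inj _ antin[OF x0(1)] x0(1)] by blast
    then show False using antne[OF x0(1)] by simp
  qed
  moreover have "(u d - 1) * (u d + 1) = 0" using ud2 by (simp add: algebra_simps)
  ultimately have ud: "u d = -1" by (simp add: eq_neg_iff_add_eq_0)
  define uv where "uv = vec (d+1) u"
  have uvc: "uv \<in> carrier_vec (d+1)" unfolding uv_def by simp
  have uvi: "uv $ j = u j" if "j < d+1" for j unfolding uv_def using that by simp
  show ?thesis
  proof (intro bexI[OF _ uvc] conjI)
    show "uv $ 0 = 1" using uvi[of 0] u0 by simp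
    show "uv $ d = -1" using uvi[of d] ud by simp
    show "mat_kernel A = {t \<cdot>\<^sub>v uv | t. True}"
    proof (rule subset_antisym; rule subsetI)
      fix v assume "v \<in> mat_kernel A"
      then have vc: "v \<in> carrier_vec (d+1)" and Kvv: "Kv d b c s (\<lambda>j. v $ j)" using ker by auto
      define t where "t = v $ 0"
      have K2: "Kv d b c s (\<lambda>j. v $ j - t * u j)" by (rule Kv_lin[OF Kvv Ku])
      have z0: "v $ 0 - t * u 0 = 0" using u0 t_def by simp
      have z: "\<forall>j<d+1. v $ j - t * u j = 0" using Kv_zero[OF K2 _ cpos] z0 by simp
      have "v = t \<cdot>\<^sub>v uv"
        by (rule eq_vecI) (use vc uvc z uvi in auto)
      then show "v \<in> {t \<cdot>\<^sub>v uv | t. True}" by blast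
    next
      fix v assume "v \<in> {t \<cdot>\<^sub>v uv | t. True}"
      then obtain t where v: "v = t \<cdot>\<^sub>v uv" by blast
      have "Kv d b c s (\<lambda>j. 0 - (- t) * u j)"
        using Kv_lin[of d b c s "\<lambda>_. 0" u "- t"] Ku by (simp add: Kv_def)
      then have "Kv d b c s (\<lambda>j. v $ j)"
        unfolding Kv_def v using uvi uvc by simp
      moreover have "v \<in> carrier_vec (d+1)" using v uvc by simp
      ultimately show "v \<in> mat_kernel A" using ker by blast
    qed
  qed
qed


lemma center:
  fixes g :: "'a \<Rightarrow> real" and s k :: real
  assumes dr: "distance_regular V E d b c"
    and K: "\<forall>x\<in>V. (\<Sum>y\<in>{y\<in>V. E x y}. g y) + s * g x = k"
    and sg: "(\<Sum>y\<in>V. g y) = 0"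
  shows "\<forall>x\<in>V. (\<Sum>y\<in>{y\<in>V. E x y}. g y) + s * g x = 0"
proof -
  note bas = dr_basic[OF dr]
  have "(\<Sum>x\<in>V. (\<Sum>y\<in>{y\<in>V. E x y}. g y) + s * g x) = (\<Sum>x\<in>V. k)"
    using K by simp
  also have "\<dots> = real (card V) * k" by simp
  finally have e1: "(\<Sum>x\<in>V. (\<Sum>y\<in>{y\<in>V. E x y}. g y) + s * g x) = real (card V) * k" .
  have "(\<Sum>x\<in>V. (\<Sum>y\<in>{y\<in>V. E x y}. g y) + s * g x)
      = (\<Sum>x\<in>V. \<Sum>y\<in>{y\<in>V. E x y}. g y) + s * (\<Sum>x\<in>V. g x)"
    by (simp add: sum.distrib sum_distrib_left)
  also have "(\<Sum>x\<in>V. \<Sum>y\<in>{y\<in>V. E x y}. g y) = (\<Sum>z\<in>V. g z * real (card {y\<in>V. E z y}))"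
    using double_count[OF bas(3) subset_refl bas(4)] .
  also have "\<dots> = (\<Sum>z\<in>V. g z * real (b 0))"
    using dr_deg[OF dr] by simp
  also have "\<dots> = 0" using sg by (simp add: sum_distrib_right[symmetric])
  finally have "real (card V) * k = 0" using e1 sg by simp
  moreover have "card V > 0" using bas(1) unfolding simple_graph_def by (simp add: card_gt_0_iff)
  ultimately have "k = 0" by simp
  then show ?thesis using K by simp
qed

lemma labels_f:
  fixes l :: "'a \<Rightarrow> nat" and s :: real and k :: real
  assumes dr: "distance_regular V E d b c"
    and bij: "bij_betw l V {1..card V}"
    and K: "\<forall>x\<in>V. real (\<Sum>y\<in>{y\<in>V. E x y}. l y) + s * real (l x) = k"
  shows "\<exists>f::'a \<Rightarrow> real. inj_on f V \<and> (\<forall>x\<in>V. (\<Sum>y\<in>{y\<in>V. E x y}. f y) + s * f x = 0)"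
proof -
  note bas = dr_basic[OF dr]
  define n where "n = card V"
  define g where "g y = real (l y) - (real n + 1) / 2" for y
  have inj: "inj_on g V" using bij_betw_imp_inj_on[OF bij] unfolding g_def inj_on_def by simp
  have "(\<Sum>y\<in>V. real (l y)) = (\<Sum>i\<in>{1..n}. real i)"
    using sum.reindex_bij_betw[OF bij, of real] unfolding n_def by simp
  moreover have "2 * (\<Sum>i\<in>{1..n}. real i) = real n * (real n + 1)"
    using double_gauss_sum_from_Suc_0[of n, where 'a=real] by simp
  moreover have "(\<Sum>y\<in>V. g y) = (\<Sum>y\<in>V. real (l y)) - real n * ((real n + 1) / 2)"
    unfolding g_def n_def by (simp add: sum_subtractf)
  ultimately have "(\<Sum>y\<in>V. g y) = 0" by (simp add: field_simps)
  moreover have "\<forall>x\<in>V. (\<Sum>y\<in>{y\<in>V. E x y}. g y) + s * g x = k - (real (b 0) + s) * ((real n + 1) / 2)"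
  proof
    fix x assume x: "x \<in> V"
    have S: "(\<Sum>y\<in>{y\<in>V. E x y}. g y) = real (\<Sum>y\<in>{y\<in>V. E x y}. l y) - real (b 0) * ((real n + 1) / 2)"
      unfolding g_def using dr_deg[OF dr x] by (simp add: sum_subtractf)
    have gx: "g x = real (l x) - (real n + 1) / 2" by (simp add: g_def)
    have Kx: "real (\<Sum>y\<in>{y\<in>V. E x y}. l y) + s * real (l x) = k" using K x by blast
    show "(\<Sum>y\<in>{y\<in>V. E x y}. g y) + s * g x = k - (real (b 0) + s) * ((real n + 1) / 2)"
      unfolding S gx using Kx by (simp add: field_simps)
  qed
  ultimately show ?thesis using center[OF dr] inj by blast
qed


theorem lemma2p5:
  fixes V :: "'a set" and E :: "'a \<Rightarrow> 'a \<Rightarrow> bool" and d :: nat and b c :: "nat \<Rightarrow> nat"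
  assumes "distance_regular V E d b c"
    and "d \<ge> 1"
    and "antipodal_double_cover V E d"
  shows "(distance_magic V E \<longrightarrow>
           (\<exists>u \<in> carrier_vec (d+1). u $ 0 = 1 \<and> u $ d = -1 \<and>
              mat_kernel (inter_matrix d b c) = {t \<cdot>\<^sub>v u | t. True}))
       \<and> (closed_distance_magic V E \<longrightarrow>
           (\<exists>u \<in> carrier_vec (d+1). u $ 0 = 1 \<and> u $ d = -1 \<and>
              mat_kernel (1\<^sub>m (d+1) + inter_matrix d b c) = {t \<cdot>\<^sub>v u | t. True}))"
proof (intro conjI impI)
  note dr = assms(1)
  note bas = dr_basic[OF dr]
  have Bc: "inter_matrix d b c \<in> carrier_mat (d+1) (d+1)" unfolding inter_matrix_def by simp
  have Bent_eq: "inter_matrix d b c $$ (i,j) = Bent b c i j" if "i < d+1" "j < d+1" for i j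
    unfolding inter_matrix_def Bent_def using that by simp
  {
    assume "distance_magic V E"
    then obtain l k where l: "bij_betw l V {1..card V}"
      and K: "\<forall>x\<in>V. (\<Sum>y\<in>{y\<in>V. E x y}. l y) = k"
      unfolding distance_magic_def by blast
    have "\<forall>x\<in>V. real (\<Sum>y\<in>{y\<in>V. E x y}. l y) + 0 * real (l x) = real k" using K by simp
    then obtain f :: "'a \<Rightarrow> real" where f: "inj_on f V"
      "\<forall>x\<in>V. (\<Sum>y\<in>{y\<in>V. E x y}. f y) + 0 * f x = 0"
      using labels_f[OF dr l] by blast
    show "\<exists>u \<in> carrier_vec (d+1). u $ 0 = 1 \<and> u $ d = -1 \<and>
              mat_kernel (inter_matrix d b c) = {t \<cdot>\<^sub>v u | t. True}"
      by (rule core[OF dr assms(2,3) f Bc]) (simp add: Bent_eq)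
  }
  {
    assume "closed_distance_magic V E"
    then obtain l k where l: "bij_betw l V {1..card V}"
      and K: "\<forall>x\<in>V. (\<Sum>y\<in>{y\<in>V. E x y} \<union> {x}. l y) = k"
      unfolding closed_distance_magic_def by blast
    have "\<forall>x\<in>V. real (\<Sum>y\<in>{y\<in>V. E x y}. l y) + 1 * real (l x) = real k"
    proof
      fix x assume x: "x \<in> V"
      have "x \<notin> {y\<in>V. E x y}" using bas(6) by blast
      moreover have "finite {y\<in>V. E x y}" using bas(3) by simp
      ultimately have "(\<Sum>y\<in>{y\<in>V. E x y} \<union> {x}. l y) = (\<Sum>y\<in>{y\<in>V. E x y}. l y) + l x"
        by simp
      then show "real (\<Sum>y\<in>{y\<in>V. E x y}. l y) + 1 * real (l x) = real k"
        using K x by (metis of_nat_add mult_1)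
    qed
    then obtain f :: "'a \<Rightarrow> real" where f: "inj_on f V"
      "\<forall>x\<in>V. (\<Sum>y\<in>{y\<in>V. E x y}. f y) + 1 * f x = 0"
      using labels_f[OF dr l] by blast
    have Ac: "1\<^sub>m (d+1) + inter_matrix d b c \<in> carrier_mat (d+1) (d+1)" using Bc by simp
    show "\<exists>u \<in> carrier_vec (d+1). u $ 0 = 1 \<and> u $ d = -1 \<and>
              mat_kernel (1\<^sub>m (d+1) + inter_matrix d b c) = {t \<cdot>\<^sub>v u | t. True}"
      by (rule core[OF dr assms(2,3) f Ac]) (use Bc Bent_eq in simp)
  }
qed

end
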